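(* Let $n_{y'}$ be the number of occurrences of $y'$ among $y_1,\dots,y_l$, and define \[ e_{y'}:=\frac{1}{Y-1}\Bigl(\frac{l+Y\alpha}{n_{y'}+\alpha}-1\Bigr),\qquad y'\in\mathbf{Y}. \] Then $(e_{y'})$ is an e-variable valid under the Bayesian model, and it is the unique solution of \[ \mathbb{E}\sum_{y'\in\mathbf{Y}\setminus\{y\}}\ln e_{y'}\to\max \] over all e-variables valid under the Bayesian model. Here the expectation is over $y_1,\dots,y_l,y$ generated from the Bayesian model.
   Context: Bayesian model: the label space is $\mathbf{Y}=\{1,\dots,Y\}$ with $Y\ge2$. The parameter $\theta$ lies in the simplex $\Theta=\{\theta\in[0,1]^Y:\sum_y\theta_y=1\}$ and is drawn from $\mathrm{Dir}(\alpha,\dots,\alpha)$ with $\alpha>0$. Given $\theta$, the observations $y_1,\dots,y_l,y$ are i.i.d. with $\Pr(y_i=u)=\theta_u$. The first $l$ observations form the training set; $y$ is the test observation. An e-variable is a family of nonnegative values $e_{y'}=f(y_1,\dots,y_l,y')$, $y'\in\mathbf{Y}$, for some function $f$. It is valid under the Bayesian model if $\mathbb{E}\,f(y_1,\dots,y_l,y)\le1$, where $y$ is the actual test observation. The convention $\ln 0=-\infty$ is used. *)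

theory Defs
  imports "HOL-Analysis.Analysis"
begin

definition labels :: "nat \<Rightarrow> nat set" where
  "labels Y = {1..Y}"

definition seqs :: "nat \<Rightarrow> nat \<Rightarrow> nat list set" where
  "seqs Y l = {ys. length ys = l \<and> set ys \<subseteq> labels Y}"

text \<open>Coordinates of the simplex: (theta_1,...,theta_{Y-1}); theta_Y = 1 - sum of the others.\<close>

definition theta_of :: "nat \<Rightarrow> (nat \<Rightarrow> real) \<Rightarrow> (nat \<Rightarrow> real)" where
  "theta_of Y x = restrict (\<lambda>u. if u = Y then 1 - (\<Sum>v\<in>{1..<Y}. x v) else x u) {1..Y}"

definition simplex_coords :: "nat \<Rightarrow> (nat \<Rightarrow> real) set" where
  "simplex_coords Y = {x. (\<forall>v\<in>{1..<Y}. 0 \<le> x v) \<and> (\<Sum>v\<in>{1..<Y}. x v) \<le> 1}"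

text \<open>Lebesgue density of the symmetric Dirichlet distribution Dir(alpha,...,alpha)
  in the coordinates (theta_1,...,theta_{Y-1}).\<close>

definition dir_density :: "nat \<Rightarrow> real \<Rightarrow> (nat \<Rightarrow> real) \<Rightarrow> real" where
  "dir_density Y \<alpha> x =
     indicator (simplex_coords Y) x * (Gamma (real Y * \<alpha>) / Gamma \<alpha> ^ Y) *
     (\<Prod>u\<in>{1..Y}. theta_of Y x u powr (\<alpha> - 1))"

definition dirichlet :: "nat \<Rightarrow> real \<Rightarrow> (nat \<Rightarrow> real) measure" where
  "dirichlet Y \<alpha> =
     distr (density (PiM {1..<Y} (\<lambda>_. lborel)) (\<lambda>x. ennreal (dir_density Y \<alpha> x)))
           (PiM {1..Y} (\<lambda>_. lborel)) (theta_of Y)"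

text \<open>Marginal probability, under the Bayesian model, that the observations are exactly
  the sequence s (theta drawn from the Dirichlet prior, then i.i.d. observations).\<close>

definition seq_prob :: "nat \<Rightarrow> real \<Rightarrow> nat list \<Rightarrow> real" where
  "seq_prob Y \<alpha> s = (\<integral>\<theta>. (\<Prod>i<length s. \<theta> (s ! i)) \<partial>dirichlet Y \<alpha>)"

definition bayes_expect :: "nat \<Rightarrow> real \<Rightarrow> nat \<Rightarrow> (nat list \<Rightarrow> nat \<Rightarrow> real) \<Rightarrow> real" where
  "bayes_expect Y \<alpha> l g =
     (\<Sum>ys\<in>seqs Y l. \<Sum>y\<in>labels Y. seq_prob Y \<alpha> (ys @ [y]) * g ys y)"

definition bayes_expect_ereal :: "nat \<Rightarrow> real \<Rightarrow> nat \<Rightarrow> (nat list \<Rightarrow> nat \<Rightarrow> ereal) \<Rightarrow> ereal" where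
  "bayes_expect_ereal Y \<alpha> l g =
     (\<Sum>ys\<in>seqs Y l. \<Sum>y\<in>labels Y. ereal (seq_prob Y \<alpha> (ys @ [y])) * g ys y)"

text \<open>An e-variable is given by a function f with e_{y'} = f (y_1...y_l) y'.\<close>

definition valid_evar :: "nat \<Rightarrow> real \<Rightarrow> nat \<Rightarrow> (nat list \<Rightarrow> nat \<Rightarrow> real) \<Rightarrow> bool" where
  "valid_evar Y \<alpha> l f \<longleftrightarrow>
     (\<forall>ys\<in>seqs Y l. \<forall>y'\<in>labels Y. 0 \<le> f ys y') \<and> bayes_expect Y \<alpha> l f \<le> 1"

definition lnE :: "real \<Rightarrow> ereal" where
  "lnE x = (if x > 0 then ereal (ln x) else -\<infinity>)"

definition objective :: "nat \<Rightarrow> real \<Rightarrow> nat \<Rightarrow> (nat list \<Rightarrow> nat \<Rightarrow> real) \<Rightarrow> ereal" where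
  "objective Y \<alpha> l f =
     bayes_expect_ereal Y \<alpha> l (\<lambda>ys y. \<Sum>y'\<in>labels Y - {y}. lnE (f ys y'))"

definition e_opt :: "nat \<Rightarrow> real \<Rightarrow> nat list \<Rightarrow> nat \<Rightarrow> real" where
  "e_opt Y \<alpha> ys y' =
     1 / (real Y - 1) * ((real (length ys) + real Y * \<alpha>) / (real (count_list ys y') + \<alpha>) - 1)"

end

theory Submission
  imports Defs
begin


lemma beta_nn:
  assumes "p > 0" "q > (0::real)"
  shows "(\<integral>\<^sup>+v. ennreal (if 0 \<le> v \<and> v \<le> 1 then v powr (p-1) * (1-v) powr (q-1) else 0) \<partial>lborel)
         = ennreal (Beta p q)"
proof -
  have "(\<integral>\<^sup>+v. ennreal (v powr (p-1) * (1-v) powr (q-1)) * indicator {0..1} v \<partial>lborel) = ennreal (Beta p q)"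
    by (rule nn_integral_has_integral_lebesgue'[OF _ has_integral_Beta_real[OF assms]]) auto
  then show ?thesis
    by (subst (asm) nn_integral_cong[where v="\<lambda>v. ennreal (if 0 \<le> v \<and> v \<le> 1 then v powr (p-1) * (1-v) powr (q-1) else 0)"])
       (auto simp: indicator_def)
qed

lemma beta_scaled:
  assumes "p > 0" "q > (0::real)" "w \<ge> 0"
  shows "(\<integral>\<^sup>+t. ennreal (if 0 \<le> t \<and> t \<le> w then t powr (p-1) * (w-t) powr (q-1) else 0) \<partial>lborel)
         = ennreal (w powr (p+q-1) * Beta p q)"
proof (cases "w = 0")
  case True
  have "\<And>t. (if 0 \<le> t \<and> t \<le> w then t powr (p-1) * (w-t) powr (q-1) else 0) = (0::real)"
    using True by auto
  then show ?thesis using True by simp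
next
  case False
  then have w: "w > 0" using assms by simp
  have "(\<integral>\<^sup>+t. ennreal (if 0 \<le> t \<and> t \<le> w then t powr (p-1) * (w-t) powr (q-1) else 0) \<partial>lborel)
     = ennreal \<bar>w\<bar> * (\<integral>\<^sup>+v. ennreal (if 0 \<le> 0 + w * v \<and> 0 + w * v \<le> w then (0 + w * v) powr (p-1) * (w-(0 + w * v)) powr (q-1) else 0) \<partial>lborel)"
    by (rule nn_integral_real_affine) (use w in auto)
  also have "(\<lambda>v. ennreal (if 0 \<le> 0 + w * v \<and> 0 + w * v \<le> w then (0 + w * v) powr (p-1) * (w-(0 + w * v)) powr (q-1) else 0))
     = (\<lambda>v. ennreal (w powr (p-1) * w powr (q-1)) * ennreal (if 0 \<le> v \<and> v \<le> 1 then v powr (p-1) * (1-v) powr (q-1) else 0))"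
  proof
    fix v
    have "w - w * v = w * (1 - v)" by (simp add: algebra_simps)
    moreover have "(0 \<le> w * v \<and> w * v \<le> w) = (0 \<le> v \<and> v \<le> 1)"
      using w by (simp add: zero_le_mult_iff mult_le_cancel_left1)
    ultimately show "ennreal (if 0 \<le> 0 + w * v \<and> 0 + w * v \<le> w then (0 + w * v) powr (p-1) * (w-(0 + w * v)) powr (q-1) else 0)
      = ennreal (w powr (p-1) * w powr (q-1)) * ennreal (if 0 \<le> v \<and> v \<le> 1 then v powr (p-1) * (1-v) powr (q-1) else 0)"
      by (auto simp: powr_mult ennreal_mult'[symmetric] mult_ac)
  qed
  also have "ennreal \<bar>w\<bar> * (\<integral>\<^sup>+v. ennreal (w powr (p-1) * w powr (q-1)) * ennreal (if 0 \<le> v \<and> v \<le> 1 then v powr (p-1) * (1-v) powr (q-1) else 0) \<partial>lborel)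
     = ennreal \<bar>w\<bar> * ennreal (w powr (p-1) * w powr (q-1)) * ennreal (Beta p q)"
    by (simp add: nn_integral_cmult beta_nn[OF assms(1,2)] mult.assoc)
  also have "\<dots> = ennreal (w powr (p+q-1) * Beta p q)"
  proof -
    have "\<bar>w\<bar> * (w powr (p-1) * w powr (q-1)) = w powr (p+q-1)"
      using w by (simp add: powr_add[symmetric] powr_mult_base)
    moreover have "Beta p q \<ge> 0" using assms by (simp add: Beta_def)
    ultimately show ?thesis
      by (simp add: ennreal_mult'[symmetric] ennreal_mult[symmetric] mult.assoc)
  qed
  finally show ?thesis .
qed



definition DF :: "nat \<Rightarrow> (nat \<Rightarrow> real) \<Rightarrow> real \<Rightarrow> (nat \<Rightarrow> real) \<Rightarrow> real" where
 "DF k a b x = (if (\<forall>v\<in>{1..<k}. 0 \<le> x v) \<and> (\<Sum>v\<in>{1..<k}. x v) \<le> 1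
     then (\<Prod>v\<in>{1..<k}. x v powr (a v - 1)) * (1 - (\<Sum>v\<in>{1..<k}. x v)) powr (b - 1) else 0)"

lemma DF_meas: "DF k a b \<in> borel_measurable (PiM {1..<k} (\<lambda>_. lborel))"
  unfolding DF_def by measurable

lemma psf: "product_sigma_finite (\<lambda>_::nat. lborel::real measure)"
  by (simp add: product_sigma_finite_def lborel.sigma_finite_measure_axioms)

lemma DF_base: "b > 0 \<Longrightarrow> (\<integral>\<^sup>+x. ennreal (DF (Suc 0) a b x) \<partial>PiM {1..<Suc 0} (\<lambda>_. lborel))
   = ennreal ((\<Prod>v\<in>{1..<Suc 0}. Gamma (a v)) * Gamma b / Gamma ((\<Sum>v\<in>{1..<Suc 0}. a v) + b))"
  by (simp add: PiM_empty DF_def nn_integral_count_space_finite Gamma_real_pos[THEN less_imp_neq, symmetric])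



lemma Beta_nonneg: "a > 0 \<Longrightarrow> b > 0 \<Longrightarrow> Beta a b \<ge> (0::real)"
  unfolding Beta_def by (intro divide_nonneg_nonneg mult_nonneg_nonneg less_imp_le[OF Gamma_real_pos]) auto

lemma DF_meas_enn: "(\<lambda>x. ennreal (DF k a b x)) \<in> borel_measurable (PiM {1..<k} (\<lambda>_. lborel))"
  by (rule measurable_compose[OF DF_meas measurable_ennreal])

lemma DF_nonneg: "DF k a b x \<ge> 0"
  unfolding DF_def by (auto intro!: mult_nonneg_nonneg prod_nonneg)

lemma DF_upd:
  fixes x :: "nat \<Rightarrow> real" and m :: nat and a :: "nat \<Rightarrow> real"
  defines "s \<equiv> (\<Sum>v\<in>{1..<Suc m}. x v)"
  defines "C \<equiv> (\<forall>v\<in>{1..<Suc m}. 0 \<le> x v)"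
  defines "P \<equiv> (\<Prod>v\<in>{1..<Suc m}. x v powr (a v - 1))"
  shows "DF (Suc (Suc m)) a b (x(Suc m := y)) =
     (if C \<and> s \<le> 1 then P else 0) *
     (if 0 \<le> y \<and> y \<le> 1 - s then y powr (a (Suc m) - 1) * ((1 - s) - y) powr (b - 1) else 0)"
proof -
  have I: "{1..<Suc (Suc m)} = insert (Suc m) {1..<Suc m}" by auto
  have fin: "finite {1..<Suc m}" "Suc m \<notin> {1..<Suc m}" by auto
  have eqx: "\<And>v. v \<in> {1..<Suc m} \<Longrightarrow> (x(Suc m := y)) v = x v" by auto
  have s': "(\<Sum>v\<in>{1..<Suc (Suc m)}. (x(Suc m := y)) v) = s + y"
    unfolding I sum.insert[OF fin] s_def sum.cong[OF refl eqx] by simp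
  have P': "(\<Prod>v\<in>{1..<Suc (Suc m)}. (x(Suc m := y)) v powr (a v - 1)) = P * y powr (a (Suc m) - 1)"
    unfolding I prod.insert[OF fin] P_def using prod.cong[OF refl, of "{1..<Suc m}" "\<lambda>v. (x(Suc m := y)) v powr (a v - 1)" "\<lambda>v. x v powr (a v - 1)"] eqx
    by simp
  have C': "(\<forall>v\<in>{1..<Suc (Suc m)}. 0 \<le> (x(Suc m := y)) v) = (C \<and> 0 \<le> y)"
    unfolding I C_def using eqx by auto
  show ?thesis
    unfolding DF_def s' P' C' by (auto simp: diff_diff_eq mult.assoc)
qed

lemma DF_inner:
  assumes "a (Suc m) > 0" "b > 0"
  shows "(\<integral>\<^sup>+y. ennreal (DF (Suc (Suc m)) a b (x(Suc m := y))) \<partial>lborel)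
       = ennreal (DF (Suc m) a (a (Suc m) + b) x * Beta (a (Suc m)) b)"
proof -
  define s where "s = (\<Sum>v\<in>{1..<Suc m}. x v)"
  define C where "C = (\<forall>v\<in>{1..<Suc m}. 0 \<le> x v)"
  define P where "P = (\<Prod>v\<in>{1..<Suc m}. x v powr (a v - 1))"
  have Pnn: "P \<ge> 0" unfolding P_def by (intro prod_nonneg) auto
  have DFx: "DF (Suc m) a (a (Suc m) + b) x = (if C \<and> s \<le> 1 then P * (1-s) powr (a (Suc m) + b - 1) else 0)"
    unfolding DF_def C_def s_def P_def by (rule refl)
  have "(\<integral>\<^sup>+y. ennreal (DF (Suc (Suc m)) a b (x(Suc m := y))) \<partial>lborel)
     = (\<integral>\<^sup>+y. ennreal (if C \<and> s \<le> 1 then P else 0) *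
         ennreal (if 0 \<le> y \<and> y \<le> 1 - s then y powr (a (Suc m) - 1) * ((1 - s) - y) powr (b - 1) else 0) \<partial>lborel)"
    unfolding DF_upd s_def[symmetric] C_def[symmetric] P_def[symmetric]
    by (rule nn_integral_cong) (simp add: ennreal_mult'[symmetric] Pnn)
  also have "\<dots> = ennreal (if C \<and> s \<le> 1 then P else 0) *
      (\<integral>\<^sup>+y. ennreal (if 0 \<le> y \<and> y \<le> 1 - s then y powr (a (Suc m) - 1) * ((1 - s) - y) powr (b - 1) else 0) \<partial>lborel)"
    by (rule nn_integral_cmult) measurable
  also have "\<dots> = ennreal (DF (Suc m) a (a (Suc m) + b) x * Beta (a (Suc m)) b)"
  proof (cases "C \<and> s \<le> 1")
    case True
    then have "1 - s \<ge> 0" by simp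
    note bs = beta_scaled[OF assms this]
    have "Beta (a (Suc m)) b \<ge> 0" using assms by (simp add: Beta_def)
    then show ?thesis using True Pnn
      unfolding bs DFx by (simp add: ennreal_mult'[symmetric] mult.assoc)
  next
    case False
    show ?thesis
      unfolding DFx if_not_P[OF False] by simp
  qed
  finally show ?thesis .
qed

lemma DF_int:
  assumes "\<forall>v\<in>{1..<Suc m}. a v > 0" "b > 0"
  shows "(\<integral>\<^sup>+x. ennreal (DF (Suc m) a b x) \<partial>PiM {1..<Suc m} (\<lambda>_. lborel))
   = ennreal ((\<Prod>v\<in>{1..<Suc m}. Gamma (a v)) * Gamma b / Gamma ((\<Sum>v\<in>{1..<Suc m}. a v) + b))"
  using assms
proof (induction m arbitrary: b)
  case 0
  then show ?case using DF_base by simp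
next
  case (Suc m)
  have I: "{1..<Suc (Suc m)} = insert (Suc m) {1..<Suc m}" by auto
  have am: "a (Suc m) > 0" using Suc.prems by auto
  have IH: "(\<integral>\<^sup>+x. ennreal (DF (Suc m) a (a (Suc m) + b) x) \<partial>PiM {1..<Suc m} (\<lambda>_. lborel))
   = ennreal ((\<Prod>v\<in>{1..<Suc m}. Gamma (a v)) * Gamma (a (Suc m) + b) / Gamma ((\<Sum>v\<in>{1..<Suc m}. a v) + (a (Suc m) + b)))"
  proof -
    have h1: "\<forall>v\<in>{1..<Suc m}. a v > 0" using Suc.prems(1) by auto
    have h2: "a (Suc m) + b > 0" using am Suc.prems(2) by linarith
    show ?thesis by (rule Suc.IH[OF h1 h2])
  qed
  have Bnn: "Beta (a (Suc m)) b \<ge> 0" using am Suc.prems(2) by (rule Beta_nonneg)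
  have "(\<integral>\<^sup>+x. ennreal (DF (Suc (Suc m)) a b x) \<partial>PiM {1..<Suc (Suc m)} (\<lambda>_. lborel))
     = (\<integral>\<^sup>+x. (\<integral>\<^sup>+y. ennreal (DF (Suc (Suc m)) a b (x(Suc m := y))) \<partial>lborel) \<partial>PiM {1..<Suc m} (\<lambda>_. lborel))"
  proof -
    have fin: "finite {1..<Suc m}" "Suc m \<notin> {1..<Suc m}" by auto
    have me: "(\<lambda>x. ennreal (DF (Suc (Suc m)) a b x)) \<in> borel_measurable (PiM (insert (Suc m) {1..<Suc m}) (\<lambda>_. lborel))"
      using DF_meas_enn[of "Suc (Suc m)" a b] unfolding I .
    show ?thesis unfolding I by (rule product_sigma_finite.product_nn_integral_insert[OF psf fin me])
  qed
  also have "\<dots> = (\<integral>\<^sup>+x. ennreal (DF (Suc m) a (a (Suc m) + b) x) * ennreal (Beta (a (Suc m)) b) \<partial>PiM {1..<Suc m} (\<lambda>_. lborel))"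
  proof (rule nn_integral_cong)
    fix x
    show "(\<integral>\<^sup>+y. ennreal (DF (Suc (Suc m)) a b (x(Suc m := y))) \<partial>lborel) = ennreal (DF (Suc m) a (a (Suc m) + b) x) * ennreal (Beta (a (Suc m)) b)"
      unfolding DF_inner[where a=a and m=m and b=b, OF am Suc.prems(2)]
      by (rule ennreal_mult'[OF DF_nonneg])
  qed
  also have "\<dots> = ennreal ((\<Prod>v\<in>{1..<Suc m}. Gamma (a v)) * Gamma (a (Suc m) + b) / Gamma ((\<Sum>v\<in>{1..<Suc m}. a v) + (a (Suc m) + b)))
      * ennreal (Beta (a (Suc m)) b)"
    unfolding nn_integral_multc[OF DF_meas_enn] IH ..
  also have "\<dots> = ennreal ((\<Prod>v\<in>{1..<Suc (Suc m)}. Gamma (a v)) * Gamma b / Gamma ((\<Sum>v\<in>{1..<Suc (Suc m)}. a v) + b))"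
  proof -
    have "a (Suc m) + b > 0" using am Suc.prems(2) by linarith
    then have "Gamma (a (Suc m) + b) > 0" by (rule Gamma_real_pos)
    then have "(\<Prod>v\<in>{1..<Suc m}. Gamma (a v)) * Gamma (a (Suc m) + b) / Gamma ((\<Sum>v\<in>{1..<Suc m}. a v) + (a (Suc m) + b))
      * Beta (a (Suc m)) b = (\<Prod>v\<in>{1..<Suc (Suc m)}. Gamma (a v)) * Gamma b / Gamma ((\<Sum>v\<in>{1..<Suc (Suc m)}. a v) + b)"
    proof -
      have fin: "finite {1..<Suc m}" "Suc m \<notin> {1..<Suc m}" by auto
      have e1: "(\<Prod>v\<in>{1..<Suc (Suc m)}. Gamma (a v)) = Gamma (a (Suc m)) * (\<Prod>v\<in>{1..<Suc m}. Gamma (a v))"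
        unfolding I by (rule prod.insert[OF fin])
      have e2: "(\<Sum>v\<in>{1..<Suc (Suc m)}. a v) + b = (\<Sum>v\<in>{1..<Suc m}. a v) + (a (Suc m) + b)"
        unfolding I sum.insert[OF fin] by linarith
      have alg: "\<And>P g h x y::real. g \<noteq> 0 \<Longrightarrow> P * g / h * (x * y / g) = x * P * y / h"
        by (simp add: field_simps)
      show ?thesis unfolding e1 e2 Beta_def
        by (rule alg) (use \<open>Gamma (a (Suc m) + b) > 0\<close> in linarith)
    qed
    moreover have "(\<Prod>v\<in>{1..<Suc m}. Gamma (a v)) * Gamma (a (Suc m) + b) / Gamma ((\<Sum>v\<in>{1..<Suc m}. a v) + (a (Suc m) + b)) \<ge> 0"
    proof -
      have h1: "\<forall>v\<in>{1..<Suc m}. a v > 0" using Suc.prems(1) by auto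
      have "(\<Sum>v\<in>{1..<Suc m}. a v) \<ge> 0" by (metis h1 less_imp_le sum_nonneg)
      then have "(\<Sum>v\<in>{1..<Suc m}. a v) + (a (Suc m) + b) > 0" using am Suc.prems(2) by linarith
      then have g1: "Gamma ((\<Sum>v\<in>{1..<Suc m}. a v) + (a (Suc m) + b)) > 0" by (rule Gamma_real_pos)
      have g2: "(\<Prod>v\<in>{1..<Suc m}. Gamma (a v)) \<ge> 0" by (metis h1 less_imp_le prod_nonneg Gamma_real_pos)
      show ?thesis by (rule divide_nonneg_nonneg[OF mult_nonneg_nonneg[OF g2 less_imp_le[OF \<open>Gamma (a (Suc m) + b) > 0\<close>]] less_imp_le[OF g1]])
    qed
    ultimately show ?thesis by (metis ennreal_mult')
  qed
  finally show ?case .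
qed



lemma prod_count:
  assumes "finite A" "set s \<subseteq> A"
  shows "(\<Prod>i<length s. f (s!i)) = (\<Prod>u\<in>A. (f u :: real) ^ count_list s u)"
  using assms(2)
proof (induction s)
  case Nil
  then show ?case by simp
next
  case (Cons a s)
  have aA: "a \<in> A" using Cons.prems by auto
  have "(\<Prod>i<length (a#s). f ((a#s)!i)) = f a * (\<Prod>i<length s. f (s!i))"
    unfolding length_Cons prod.lessThan_Suc_shift by simp
  also have "\<dots> = f a * (\<Prod>u\<in>A. f u ^ count_list s u)" using Cons by auto
  also have "(\<Prod>u\<in>A. f u ^ count_list (a#s) u) = (\<Prod>u\<in>A. f u ^ (if u = a then 1 else 0)) * (\<Prod>u\<in>A. f u ^ count_list s u)"
    by (auto simp: power_add prod.distrib[symmetric] intro!: prod.cong)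
  moreover have "(\<Prod>u\<in>A. f u ^ (if u = a then 1 else 0)) = f a"
  proof -
    have "(\<Prod>u\<in>A. f u ^ (if u = a then 1 else 0)) = (\<Prod>u\<in>A. if u = a then f u else 1)"
      by (rule prod.cong) auto
    also have "\<dots> = f a" using assms(1) aA by (simp add: prod.delta')
    finally show ?thesis .
  qed
  ultimately show ?case by simp
qed

lemma sum_count:
  assumes "finite A" "set s \<subseteq> A"
  shows "(\<Sum>u\<in>A. count_list s u) = length s"
  using assms(2)
proof (induction s)
  case Nil
  then show ?case by simp
next
  case (Cons a s)
  have aA: "a \<in> A" using Cons.prems by auto
  have "(\<Sum>u\<in>A. count_list (a#s) u) = (\<Sum>u\<in>A. (if u = a then 1 else 0)) + (\<Sum>u\<in>A. count_list s u)"
    by (auto simp: sum.distrib[symmetric] intro!: sum.cong)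
  also have "(\<Sum>u\<in>A. (if u = a then 1 else 0::nat)) = 1"
    using assms(1) aA by (simp add: sum.delta)
  finally show ?case using Cons by auto
qed



definition Kc :: "nat \<Rightarrow> real \<Rightarrow> real" where
  "Kc Y \<alpha> = Gamma (real Y * \<alpha>) / Gamma \<alpha> ^ Y"

lemma pw_powr: "t \<ge> 0 \<Longrightarrow> t ^ n * t powr (\<alpha> - 1) = t powr (real n + \<alpha> - 1)"
proof (cases "t = 0")
  case True then show ?thesis by simp
next
  case False
  assume "t \<ge> 0"
  then have "t > 0" using False by simp
  then show ?thesis by (simp add: powr_realpow[symmetric] powr_add[symmetric] add_diff_eq)
qed

lemma dens_point:
  assumes Y: "Y \<ge> 1" and s: "set s \<subseteq> {1..Y}"
  shows "dir_density Y \<alpha> x * (\<Prod>i<length s. theta_of Y x (s!i))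
     = Kc Y \<alpha> * DF Y (\<lambda>v. real (count_list s v) + \<alpha>) (real (count_list s Y) + \<alpha>) x"
proof (cases "(\<forall>v\<in>{1..<Y}. 0 \<le> x v) \<and> (\<Sum>v\<in>{1..<Y}. x v) \<le> 1")
  case True
  define S where "S = (\<Sum>v\<in>{1..<Y}. x v)"
  have th: "\<And>u. u \<in> {1..Y} \<Longrightarrow> theta_of Y x u = (if u = Y then 1 - S else x u)"
    by (simp add: theta_of_def S_def)
  have nn: "\<And>u. u \<in> {1..Y} \<Longrightarrow> theta_of Y x u \<ge> 0"
    using True th by (auto simp: S_def)
  have ins: "{1..Y} = insert Y {1..<Y}" using Y by auto
  have fin: "finite {1..<Y}" "Y \<notin> {1..<Y}" by auto
  have "(\<Prod>i<length s. theta_of Y x (s!i)) * (\<Prod>u\<in>{1..Y}. theta_of Y x u powr (\<alpha> - 1))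
     = (\<Prod>u\<in>{1..Y}. theta_of Y x u ^ count_list s u) * (\<Prod>u\<in>{1..Y}. theta_of Y x u powr (\<alpha> - 1))"
    by (simp add: prod_count[OF _ s])
  also have "\<dots> = (\<Prod>u\<in>{1..Y}. theta_of Y x u powr (real (count_list s u) + \<alpha> - 1))"
    unfolding prod.distrib[symmetric] by (rule prod.cong[OF refl]) (simp add: pw_powr nn)
  also have "\<dots> = (1 - S) powr (real (count_list s Y) + \<alpha> - 1) *
      (\<Prod>u\<in>{1..<Y}. x u powr (real (count_list s u) + \<alpha> - 1))"
  proof -
    have "(\<Prod>u\<in>{1..<Y}. theta_of Y x u powr (real (count_list s u) + \<alpha> - 1))
        = (\<Prod>u\<in>{1..<Y}. x u powr (real (count_list s u) + \<alpha> - 1))"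
      by (rule prod.cong[OF refl]) (simp add: th)
    moreover have "theta_of Y x Y = 1 - S" using th Y by simp
    ultimately show ?thesis unfolding ins prod.insert[OF fin] by simp
  qed
  finally have eq: "(\<Prod>i<length s. theta_of Y x (s!i)) * (\<Prod>u\<in>{1..Y}. theta_of Y x u powr (\<alpha> - 1))
     = (1 - S) powr (real (count_list s Y) + \<alpha> - 1) *
      (\<Prod>u\<in>{1..<Y}. x u powr (real (count_list s u) + \<alpha> - 1))" .
  have ind: "indicator (simplex_coords Y) x = (1::real)"
    using True by (simp add: simplex_coords_def indicator_def)
  have DFx: "DF Y (\<lambda>v. real (count_list s v) + \<alpha>) (real (count_list s Y) + \<alpha>) x
     = (\<Prod>u\<in>{1..<Y}. x u powr (real (count_list s u) + \<alpha> - 1)) * (1 - S) powr (real (count_list s Y) + \<alpha> - 1)"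
    using True unfolding DF_def S_def by simp
  show ?thesis
    unfolding dir_density_def ind DFx Kc_def using eq by (simp add: mult_ac)
next
  case False
  have ind: "indicator (simplex_coords Y) x = (0::real)"
    using False by (simp add: simplex_coords_def indicator_def)
  have DFx: "DF Y (\<lambda>v. real (count_list s v) + \<alpha>) (real (count_list s Y) + \<alpha>) x = 0"
    unfolding DF_def by (rule if_not_P[OF False])
  show ?thesis unfolding dir_density_def ind DFx by simp
qed



lemma theta_meas: "theta_of Y \<in> measurable (PiM {1..<Y} (\<lambda>_. lborel)) (PiM {1..Y} (\<lambda>_. lborel))"
  unfolding theta_of_def
proof (rule measurable_restrict)
  fix u assume u: "u \<in> {1..Y}"
  show "(\<lambda>x. if u = Y then 1 - (\<Sum>v\<in>{1..<Y}. x v) else x u) \<in> measurable (PiM {1..<Y} (\<lambda>_. lborel)) lborel"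
  proof (cases "u = Y")
    case True
    then show ?thesis by simp
  next
    case False
    then have "u \<in> {1..<Y}" using u by auto
    then have "(\<lambda>x. x u) \<in> measurable (PiM {1..<Y} (\<lambda>_. lborel)) lborel"
      by (rule measurable_component_singleton)
    then show ?thesis using False by simp
  qed
qed

lemma prod_meas:
  assumes "set s \<subseteq> {1..Y}"
  shows "(\<lambda>\<theta>. \<Prod>i<length s. \<theta> (s!i) :: real) \<in> borel_measurable (PiM {1..Y} (\<lambda>_. lborel))"
proof (rule borel_measurable_prod)
  fix i assume "i \<in> {..<length s}"
  then have "s!i \<in> {1..Y}" using assms nth_mem by blast
  then have "(\<lambda>\<theta>. \<theta> (s!i)) \<in> measurable (PiM {1..Y} (\<lambda>_. lborel)) lborel"
    by (rule measurable_component_singleton)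
  then show "(\<lambda>\<theta>. \<theta> (s!i) :: real) \<in> borel_measurable (PiM {1..Y} (\<lambda>_. lborel))" by simp
qed

lemma dd_eq: "Y \<ge> 1 \<Longrightarrow> dir_density Y \<alpha> = (\<lambda>x. Kc Y \<alpha> * DF Y (\<lambda>v. \<alpha>) \<alpha> x)"
  using dens_point[of Y "[]" \<alpha>] by (intro ext) simp

lemma Kc_pos: "\<alpha> > 0 \<Longrightarrow> Y \<ge> 1 \<Longrightarrow> Kc Y \<alpha> > 0"
  unfolding Kc_def by (intro divide_pos_pos zero_less_power Gamma_real_pos) auto

lemma seq_prob_eq:
  assumes Y: "Y \<ge> 1" and \<alpha>: "\<alpha> > 0" and s: "set s \<subseteq> {1..Y}"
  shows "seq_prob Y \<alpha> s = Kc Y \<alpha> * (\<Prod>u\<in>{1..Y}. Gamma (real (count_list s u) + \<alpha>))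
            / Gamma (real (length s) + real Y * \<alpha>)"
proof -
  obtain m where Ym: "Y = Suc m" using Y by (cases Y) auto
  define a where "a = (\<lambda>v. real (count_list s v) + \<alpha>)"
  define b where "b = real (count_list s Y) + \<alpha>"
  let ?M = "PiM {1..<Y} (\<lambda>_. lborel) :: (nat \<Rightarrow> real) measure"
  have md: "dir_density Y \<alpha> \<in> borel_measurable ?M"
    unfolding dd_eq[OF Y] by (intro borel_measurable_times borel_measurable_const DF_meas)
  have dnn: "\<And>x. dir_density Y \<alpha> x \<ge> 0"
    unfolding dd_eq[OF Y] using Kc_pos[OF \<alpha> Y] DF_nonneg by (simp add: less_imp_le)
  have "seq_prob Y \<alpha> s = (\<integral>x. (\<Prod>i<length s. theta_of Y x (s!i)) \<partial>density ?M (\<lambda>x. ennreal (dir_density Y \<alpha> x)))"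
    unfolding seq_prob_def dirichlet_def
    by (rule integral_distr[OF _ prod_meas[OF s]]) (unfold measurable_density_eq1, rule theta_meas)
  also have "\<dots> = (\<integral>x. dir_density Y \<alpha> x * (\<Prod>i<length s. theta_of Y x (s!i)) \<partial>?M)"
  proof -
    have "(\<lambda>x. \<Prod>i<length s. theta_of Y x (s!i)) \<in> borel_measurable ?M"
      using measurable_comp[OF theta_meas prod_meas[OF s]] by (simp add: comp_def)
    then show ?thesis
      by (subst integral_density) (use md dnn in auto)
  qed
  also have "\<dots> = (\<integral>x. Kc Y \<alpha> * DF Y a b x \<partial>?M)"
    unfolding a_def b_def by (rule Bochner_Integration.integral_cong[OF refl]) (rule dens_point[OF Y s])
  also have "\<dots> = Kc Y \<alpha> * ((\<Prod>v\<in>{1..<Y}. Gamma (a v)) * Gamma b / Gamma ((\<Sum>v\<in>{1..<Y}. a v) + b))"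
  proof (rule has_bochner_integral_integral_eq, rule has_bochner_integral_nn_integral)
    show "(\<lambda>x. Kc Y \<alpha> * DF Y a b x) \<in> borel_measurable ?M"
      by (intro borel_measurable_times borel_measurable_const DF_meas)
    show "AE x in ?M. 0 \<le> Kc Y \<alpha> * DF Y a b x"
      using Kc_pos[OF \<alpha> Y] DF_nonneg by (simp add: less_imp_le)
    have apos: "\<forall>v\<in>{1..<Suc m}. a v > 0" using \<alpha> unfolding a_def by (auto intro: add_nonneg_pos)
    have bpos: "b > 0" using \<alpha> unfolding b_def by (auto intro: add_nonneg_pos)
    have sp: "(\<Sum>v\<in>{1..<Y}. a v) \<ge> 0" using apos Ym by (metis less_imp_le sum_nonneg)
    have G1: "Gamma ((\<Sum>v\<in>{1..<Y}. a v) + b) > 0" using sp bpos by (intro Gamma_real_pos) linarith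
    have G2: "(\<Prod>v\<in>{1..<Y}. Gamma (a v)) \<ge> 0" using apos Ym by (metis less_imp_le prod_nonneg Gamma_real_pos)
    have G3: "Gamma b > 0" using bpos by (rule Gamma_real_pos)
    have val_nn: "(\<Prod>v\<in>{1..<Y}. Gamma (a v)) * Gamma b / Gamma ((\<Sum>v\<in>{1..<Y}. a v) + b) \<ge> 0"
      using G1 G2 G3 by (intro divide_nonneg_nonneg mult_nonneg_nonneg) auto
    show "0 \<le> Kc Y \<alpha> * ((\<Prod>v\<in>{1..<Y}. Gamma (a v)) * Gamma b / Gamma ((\<Sum>v\<in>{1..<Y}. a v) + b))"
      using Kc_pos[OF \<alpha> Y] val_nn by (intro mult_nonneg_nonneg) auto
    have "(\<integral>\<^sup>+x. ennreal (Kc Y \<alpha> * DF Y a b x) \<partial>?M) = (\<integral>\<^sup>+x. ennreal (Kc Y \<alpha>) * ennreal (DF Y a b x) \<partial>?M)"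
      using Kc_pos[OF \<alpha> Y] by (intro nn_integral_cong) (simp add: ennreal_mult')
    also have "\<dots> = ennreal (Kc Y \<alpha>) * (\<integral>\<^sup>+x. ennreal (DF Y a b x) \<partial>?M)"
      by (rule nn_integral_cmult) (rule DF_meas_enn)
    also have "(\<integral>\<^sup>+x. ennreal (DF Y a b x) \<partial>?M) = ennreal ((\<Prod>v\<in>{1..<Y}. Gamma (a v)) * Gamma b / Gamma ((\<Sum>v\<in>{1..<Y}. a v) + b))"
      unfolding Ym by (rule DF_int[OF apos bpos])
    finally show "(\<integral>\<^sup>+x. ennreal (Kc Y \<alpha> * DF Y a b x) \<partial>?M) = ennreal (Kc Y \<alpha> * ((\<Prod>v\<in>{1..<Y}. Gamma (a v)) * Gamma b / Gamma ((\<Sum>v\<in>{1..<Y}. a v) + b)))"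
      using Kc_pos[OF \<alpha> Y] by (simp add: ennreal_mult'[symmetric] less_imp_le)
  qed
  also have "\<dots> = Kc Y \<alpha> * (\<Prod>u\<in>{1..Y}. Gamma (real (count_list s u) + \<alpha>)) / Gamma (real (length s) + real Y * \<alpha>)"
  proof -
    have ins: "{1..Y} = insert Y {1..<Y}" using Y by auto
    have fin: "finite {1..<Y}" "Y \<notin> {1..<Y}" by auto
    have p: "(\<Prod>v\<in>{1..<Y}. Gamma (a v)) * Gamma b = (\<Prod>u\<in>{1..Y}. Gamma (real (count_list s u) + \<alpha>))"
      unfolding ins prod.insert[OF fin] a_def b_def by simp
    have "(\<Sum>v\<in>{1..<Y}. a v) + b = (\<Sum>u\<in>{1..Y}. a u)"
      unfolding ins sum.insert[OF fin] b_def a_def by simp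
    also have "\<dots> = real (\<Sum>u\<in>{1..Y}. count_list s u) + real Y * \<alpha>"
      unfolding a_def by (simp add: sum.distrib)
    also have "\<dots> = real (length s) + real Y * \<alpha>"
      unfolding sum_count[OF finite_atLeastAtMost s] ..
    finally have q: "(\<Sum>v\<in>{1..<Y}. a v) + b = real (length s) + real Y * \<alpha>" .
    show ?thesis unfolding p q by simp
  qed
  finally show ?thesis .
qed



definition pp :: "nat \<Rightarrow> real \<Rightarrow> nat list \<Rightarrow> nat \<Rightarrow> real" where
  "pp Y \<alpha> s y = (real (count_list s y) + \<alpha>) / (real (length s) + real Y * \<alpha>)"

lemma Gamma_p1: "x > 0 \<Longrightarrow> Gamma (x + 1) = x * Gamma (x::real)"
  by (rule Gamma_plus1) (auto dest: nonpos_Ints_nonpos)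

lemma seq_prob_pos:
  assumes "Y \<ge> 1" "\<alpha> > 0" "set s \<subseteq> {1..Y}"
  shows "seq_prob Y \<alpha> s > 0"
proof -
  have "(\<Prod>u\<in>{1..Y}. Gamma (real (count_list s u) + \<alpha>)) > 0"
    using assms(2) by (intro prod_pos Gamma_real_pos) (auto intro: add_nonneg_pos)
  moreover have "Gamma (real (length s) + real Y * \<alpha>) > 0"
    using assms by (intro Gamma_real_pos add_nonneg_pos) auto
  ultimately show ?thesis
    unfolding seq_prob_eq[OF assms] using Kc_pos[OF assms(2,1)] by simp
qed

lemma seq_prob_snoc:
  assumes Y: "Y \<ge> 1" and \<alpha>: "\<alpha> > 0" and s: "set s \<subseteq> {1..Y}" and y: "y \<in> {1..Y}"
  shows "seq_prob Y \<alpha> (s @ [y]) = seq_prob Y \<alpha> s * pp Y \<alpha> s y"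
proof -
  have s': "set (s @ [y]) \<subseteq> {1..Y}" using s y by auto
  define c where "c = real (count_list s y) + \<alpha>"
  define L where "L = real (length s) + real Y * \<alpha>"
  have cpos: "c > 0" unfolding c_def using \<alpha> by (auto intro: add_nonneg_pos)
  have Lpos: "L > 0" unfolding L_def using \<alpha> Y by (intro add_nonneg_pos) auto
  have fin: "finite {1..Y}" by simp
  have "(\<Prod>u\<in>{1..Y}. Gamma (real (count_list (s @ [y]) u) + \<alpha>))
      = Gamma (c + 1) * (\<Prod>u\<in>{1..Y} - {y}. Gamma (real (count_list s u) + \<alpha>))"
  proof -
    have "(\<Prod>u\<in>{1..Y}. Gamma (real (count_list (s @ [y]) u) + \<alpha>))
       = Gamma (real (count_list (s @ [y]) y) + \<alpha>) * (\<Prod>u\<in>{1..Y} - {y}. Gamma (real (count_list (s @ [y]) u) + \<alpha>))"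
      by (rule prod.remove[OF fin y])
    also have "(\<Prod>u\<in>{1..Y} - {y}. Gamma (real (count_list (s @ [y]) u) + \<alpha>))
       = (\<Prod>u\<in>{1..Y} - {y}. Gamma (real (count_list s u) + \<alpha>))"
      by (rule prod.cong) auto
    finally show ?thesis unfolding c_def by (simp add: add_ac)
  qed
  also have "\<dots> = c * (\<Prod>u\<in>{1..Y}. Gamma (real (count_list s u) + \<alpha>))"
    by (subst Gamma_p1[OF cpos], subst prod.remove[OF fin y], simp add: c_def mult.assoc)
  finally have P: "(\<Prod>u\<in>{1..Y}. Gamma (real (count_list (s @ [y]) u) + \<alpha>))
       = c * (\<Prod>u\<in>{1..Y}. Gamma (real (count_list s u) + \<alpha>))" .
  have G: "Gamma (real (length (s @ [y])) + real Y * \<alpha>) = L * Gamma L"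
  proof -
    have "real (length (s @ [y])) + real Y * \<alpha> = L + 1" unfolding L_def by simp
    then show ?thesis using Gamma_p1[OF Lpos] by (simp only:)
  qed
  have GL: "Gamma L > 0" using Lpos by simp
  show ?thesis
    unfolding seq_prob_eq[OF Y \<alpha> s'] seq_prob_eq[OF Y \<alpha> s] P G pp_def c_def[symmetric] L_def[symmetric]
    using GL Lpos by (simp add: mult_ac)
qed

lemma sum_pp:
  assumes "\<alpha> > 0" "set s \<subseteq> {1..Y}" "Y \<ge> 1"
  shows "(\<Sum>y\<in>{1..Y}. pp Y \<alpha> s y) = 1"
proof -
  have "(\<Sum>y\<in>{1..Y}. real (count_list s y) + \<alpha>) = real (length s) + real Y * \<alpha>"
  proof -
    have sc: "(\<Sum>u\<in>{1..Y}. count_list s u) = length s" by (rule sum_count[OF finite_atLeastAtMost assms(2)])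
    have "(\<Sum>y\<in>{1..Y}. real (count_list s y) + \<alpha>) = real (\<Sum>u\<in>{1..Y}. count_list s u) + real Y * \<alpha>"
      by (simp add: sum.distrib)
    then show ?thesis unfolding sc .
  qed
  moreover have "real (length s) + real Y * \<alpha> > 0" using assms by (intro add_nonneg_pos) auto
  ultimately show ?thesis unfolding pp_def by (simp add: sum_divide_distrib[symmetric])
qed

lemma seqs_Suc: "seqs Y (Suc l) = (\<lambda>(ys, y). ys @ [y]) ` (seqs Y l \<times> labels Y)"
proof
  show "(\<lambda>(ys, y). ys @ [y]) ` (seqs Y l \<times> labels Y) \<subseteq> seqs Y (Suc l)"
    by (auto simp: seqs_def)
next
  show "seqs Y (Suc l) \<subseteq> (\<lambda>(ys, y). ys @ [y]) ` (seqs Y l \<times> labels Y)"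
  proof
    fix zs assume zs: "zs \<in> seqs Y (Suc l)"
    then have ne: "zs \<noteq> []" by (auto simp: seqs_def)
    have "zs = butlast zs @ [last zs]" using ne by simp
    moreover have "butlast zs \<in> seqs Y l" using zs by (auto simp: seqs_def dest: in_set_butlastD)
    moreover have "last zs \<in> labels Y" using zs ne by (auto simp: seqs_def)
    ultimately show "zs \<in> (\<lambda>(ys, y). ys @ [y]) ` (seqs Y l \<times> labels Y)"
      by (metis (no_types, lifting) SigmaI case_prod_conv image_eqI)
  qed
qed

lemma inj_snoc: "inj_on (\<lambda>(ys, y). ys @ [y]) A"
  by (auto simp: inj_on_def)

lemma finite_seqs: "finite (seqs Y l)"
proof -
  have "seqs Y l = {ys. set ys \<subseteq> labels Y \<and> length ys = l}" by (auto simp: seqs_def)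
  then show ?thesis by (simp add: finite_lists_length_eq labels_def)
qed

lemma sum_over_seqs_Suc:
  "(\<Sum>zs\<in>seqs Y (Suc l). g zs) = (\<Sum>ys\<in>seqs Y l. \<Sum>y\<in>labels Y. g (ys @ [y]))"
  unfolding seqs_Suc sum.reindex[OF inj_snoc] sum.cartesian_product by (simp add: case_prod_unfold)

lemma sum_seq_prob:
  assumes "Y \<ge> 1" "\<alpha> > 0"
  shows "(\<Sum>ys\<in>seqs Y l. seq_prob Y \<alpha> ys) = 1"
proof (induction l)
  case 0
  have "seqs Y 0 = {[]}" by (auto simp: seqs_def)
  moreover have "seq_prob Y \<alpha> [] = 1"
  proof -
    have "Gamma \<alpha> > 0" "Gamma (real Y * \<alpha>) > 0" using assms by auto
    then show ?thesis using seq_prob_eq[OF assms, of "[]"] by (simp add: Kc_def)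
  qed
  ultimately show ?case by simp
next
  case (Suc l)
  have "(\<Sum>zs\<in>seqs Y (Suc l). seq_prob Y \<alpha> zs) = (\<Sum>ys\<in>seqs Y l. \<Sum>y\<in>labels Y. seq_prob Y \<alpha> (ys @ [y]))"
    by (rule sum_over_seqs_Suc)
  also have "\<dots> = (\<Sum>ys\<in>seqs Y l. seq_prob Y \<alpha> ys * (\<Sum>y\<in>labels Y. pp Y \<alpha> ys y))"
    by (rule sum.cong[OF refl]) (auto simp: sum_distrib_left labels_def seqs_def seq_prob_snoc[OF assms] intro!: sum.cong)
  also have "\<dots> = (\<Sum>ys\<in>seqs Y l. seq_prob Y \<alpha> ys)"
  proof (rule sum.cong[OF refl])
    fix ys assume "ys \<in> seqs Y l"
    then have "set ys \<subseteq> {1..Y}" by (simp add: seqs_def labels_def)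
    from sum_pp[OF assms(2) this assms(1)] show "seq_prob Y \<alpha> ys * (\<Sum>y\<in>labels Y. pp Y \<alpha> ys y) = seq_prob Y \<alpha> ys"
      by (simp add: labels_def)
  qed
  finally show ?case using Suc by simp
qed



lemma pp_e_facts:
  assumes Y: "Y \<ge> 2" and \<alpha>: "\<alpha> > 0" and s: "set ys \<subseteq> {1..Y}" and y: "y \<in> {1..Y}"
  shows "pp Y \<alpha> ys y > 0" "pp Y \<alpha> ys y < 1" "e_opt Y \<alpha> ys y > 0"
        "e_opt Y \<alpha> ys y * ((real Y - 1) * pp Y \<alpha> ys y) = 1 - pp Y \<alpha> ys y"
proof -
  define c where "c = real (count_list ys y) + \<alpha>"
  define Lt where "Lt = real (length ys) + real Y * \<alpha>"
  have cpos: "c > 0" unfolding c_def using \<alpha> by (auto intro: add_nonneg_pos)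
  have "real (count_list ys y) \<le> real (length ys)" by (simp add: count_le_length)
  moreover have "\<alpha> < real Y * \<alpha>" using Y \<alpha> by simp
  ultimately have cL: "c < Lt" unfolding c_def Lt_def by linarith
  have Lpos: "Lt > 0" using cpos cL by linarith
  have Y1: "real Y - 1 > 0" using Y by simp
  have ppd: "pp Y \<alpha> ys y = c / Lt" unfolding pp_def c_def Lt_def ..
  have ed: "e_opt Y \<alpha> ys y = 1 / (real Y - 1) * (Lt / c - 1)" unfolding e_opt_def c_def Lt_def ..
  show "pp Y \<alpha> ys y > 0" unfolding ppd using cpos Lpos by simp
  show "pp Y \<alpha> ys y < 1" unfolding ppd using cL Lpos by simp
  have "Lt / c > 1" using cL cpos by simp
  then show "e_opt Y \<alpha> ys y > 0" unfolding ed using Y1 by simp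
  show "e_opt Y \<alpha> ys y * ((real Y - 1) * pp Y \<alpha> ys y) = 1 - pp Y \<alpha> ys y"
    unfolding ed ppd using Y1 cpos Lpos by (simp add: field_simps)
qed

lemma swap_sum:
  fixes p g :: "nat \<Rightarrow> real"
  assumes "finite A" "(\<Sum>y\<in>A. p y) = 1"
  shows "(\<Sum>y\<in>A. p y * (\<Sum>y'\<in>A - {y}. g y')) = (\<Sum>y'\<in>A. g y' * (1 - p y'))"
proof -
  have "(\<Sum>y\<in>A. p y * (\<Sum>y'\<in>A - {y}. g y')) = (\<Sum>y\<in>A. p y * ((\<Sum>y'\<in>A. g y') - g y))"
    by (rule sum.cong[OF refl]) (simp add: sum_diff1 assms(1))
  also have "\<dots> = (\<Sum>y'\<in>A. g y') * (\<Sum>y\<in>A. p y) - (\<Sum>y\<in>A. p y * g y)"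
  proof -
    have "(\<Sum>y\<in>A. p y * (\<Sum>y'\<in>A. g y')) = (\<Sum>y'\<in>A. g y') * (\<Sum>y\<in>A. p y)"
      by (simp add: sum_distrib_left mult.commute)
    then show ?thesis by (simp add: right_diff_distrib sum_subtractf)
  qed
  also have "\<dots> = (\<Sum>y'\<in>A. g y' * (1 - p y'))"
    using assms(2) by (simp add: right_diff_distrib sum_subtractf mult.commute)
  finally show ?thesis .
qed

lemma lnE_le:
  assumes "x \<ge> 0" "c > 0"
  shows "lnE x \<le> ereal (ln c + (x - c) / c)"
proof (cases "x > 0")
  case True
  have "ln (x / c) \<le> x / c - 1" using True assms by (intro ln_le_minus_one) simp
  then have "ln x - ln c \<le> (x - c) / c" using True assms by (simp add: ln_div diff_divide_distrib)
  then show ?thesis using True by (simp add: lnE_def)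
next
  case False then show ?thesis by (simp add: lnE_def)
qed

lemma ln_strict: fixes t :: real assumes "t > 0" "t \<noteq> 1" shows "ln t < t - 1"
proof -
  define r where "r = sqrt t"
  have r: "r > 0" "r * r = t" using assms unfolding r_def by simp_all
  have "r \<noteq> 1"
  proof
    assume "r = 1"
    then have "t = 1" using r(2) by simp
    then show False using assms(2) by simp
  qed
  have "ln t = 2 * ln r" using ln_mult[of r r] r by simp
  also have "\<dots> \<le> 2 * (r - 1)" using ln_le_minus_one[OF r(1)] by simp
  also have "\<dots> < t - 1"
  proof -
    have "(r - 1) * (r - 1) > 0" using \<open>r \<noteq> 1\<close> by (metis mult_pos_pos mult_neg_neg linorder_neqE_linordered_idom diff_gt_0_iff_gt diff_less_0_iff_less)
    then show ?thesis using r by (simp add: algebra_simps)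
  qed
  finally show ?thesis .
qed

lemma lnE_less:
  assumes "x \<ge> 0" "c > 0" "x \<noteq> c"
  shows "lnE x < ereal (ln c + (x - c) / c)"
proof (cases "x > 0")
  case True
  have "x / c \<noteq> 1" using assms by simp
  then have "ln (x / c) < x / c - 1" using True assms by (intro ln_strict) simp_all
  then have "ln x - ln c < (x - c) / c" using True assms by (simp add: ln_div diff_divide_distrib)
  then show ?thesis using True by (simp add: lnE_def)
next
  case False then show ?thesis by (simp add: lnE_def)
qed

lemma sum_strict_ereal:
  fixes T :: "'a \<Rightarrow> ereal" and U :: "'a \<Rightarrow> real"
  assumes "finite A" "\<And>a. a \<in> A \<Longrightarrow> T a \<le> ereal (U a)" "a0 \<in> A" "T a0 < ereal (U a0)"
  shows "sum T A < ereal (sum U A)"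
proof -
  have "sum T A = T a0 + sum T (A - {a0})" by (rule sum.remove[OF assms(1,3)])
  also have "\<dots> \<le> T a0 + ereal (sum U (A - {a0}))"
  proof -
    have "sum T (A - {a0}) \<le> sum (\<lambda>a. ereal (U a)) (A - {a0})" by (rule sum_mono) (use assms(2) in auto)
    then show ?thesis by (simp add: add_left_mono)
  qed
  also have "\<dots> < ereal (U a0) + ereal (sum U (A - {a0}))"
    using assms(4) by (cases "T a0") auto
  also have "\<dots> = ereal (sum U A)" using sum.remove[OF assms(1,3), of U] by simp
  finally show ?thesis .
qed

lemma sum_le_ereal:
  fixes T :: "'a \<Rightarrow> ereal" and U :: "'a \<Rightarrow> real"
  assumes "\<And>a. a \<in> A \<Longrightarrow> T a \<le> ereal (U a)"
  shows "sum T A \<le> ereal (sum U A)"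
proof -
  have "sum T A \<le> sum (\<lambda>a. ereal (U a)) A" by (rule sum_mono) (use assms in auto)
  then show ?thesis by simp
qed



lemma per_ys:
  fixes f :: "nat \<Rightarrow> real"
  assumes Y2: "Y \<ge> 2" and \<alpha>: "\<alpha> > 0" and s: "set ys \<subseteq> {1..Y}"
  shows "(\<Sum>y\<in>labels Y. seq_prob Y \<alpha> (ys@[y]) * (\<Sum>y'\<in>labels Y - {y}. ln (e_opt Y \<alpha> ys y') + (f y' - e_opt Y \<alpha> ys y') / e_opt Y \<alpha> ys y'))
   = (\<Sum>y\<in>labels Y. seq_prob Y \<alpha> (ys@[y]) * (\<Sum>y'\<in>labels Y - {y}. ln (e_opt Y \<alpha> ys y')))
     + (real Y - 1) * ((\<Sum>y\<in>labels Y. seq_prob Y \<alpha> (ys@[y]) * f y) - (\<Sum>y\<in>labels Y. seq_prob Y \<alpha> (ys@[y]) * e_opt Y \<alpha> ys y))"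
proof -
  define e where "e = e_opt Y \<alpha> ys"
  define p where "p = pp Y \<alpha> ys"
  define P0 where "P0 = seq_prob Y \<alpha> ys"
  define g where "g = (\<lambda>y'. (f y' - e y') / e y')"
  have Y1: "Y \<ge> 1" using Y2 by simp
  have Ps: "\<And>y. y \<in> labels Y \<Longrightarrow> seq_prob Y \<alpha> (ys@[y]) = P0 * p y"
    unfolding P0_def p_def labels_def using seq_prob_snoc[OF Y1 \<alpha> s] by simp
  have fin: "finite (labels Y)" by (simp add: labels_def)
  have sp: "(\<Sum>y\<in>labels Y. p y) = 1" unfolding p_def labels_def by (rule sum_pp[OF \<alpha> s Y1])
  have gp: "\<And>y'. y' \<in> labels Y \<Longrightarrow> g y' * (1 - p y') = (real Y - 1) * (p y' * (f y' - e y'))"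
  proof -
    fix y' assume "y' \<in> labels Y"
    then have y': "y' \<in> {1..Y}" by (simp add: labels_def)
    have rel: "e y' * ((real Y - 1) * p y') = 1 - p y'" unfolding e_def p_def by (rule pp_e_facts(4)[OF Y2 \<alpha> s y'])
    have ep: "e y' > 0" unfolding e_def by (rule pp_e_facts(3)[OF Y2 \<alpha> s y'])
    show "g y' * (1 - p y') = (real Y - 1) * (p y' * (f y' - e y'))"
      unfolding g_def rel[symmetric] using ep by (simp add: field_simps)
  qed
  have "(\<Sum>y\<in>labels Y. seq_prob Y \<alpha> (ys@[y]) * (\<Sum>y'\<in>labels Y - {y}. ln (e y') + g y'))
     = (\<Sum>y\<in>labels Y. seq_prob Y \<alpha> (ys@[y]) * (\<Sum>y'\<in>labels Y - {y}. ln (e y')))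
       + (\<Sum>y\<in>labels Y. seq_prob Y \<alpha> (ys@[y]) * (\<Sum>y'\<in>labels Y - {y}. g y'))"
    by (simp add: sum.distrib distrib_left)
  also have "(\<Sum>y\<in>labels Y. seq_prob Y \<alpha> (ys@[y]) * (\<Sum>y'\<in>labels Y - {y}. g y'))
      = P0 * (\<Sum>y\<in>labels Y. p y * (\<Sum>y'\<in>labels Y - {y}. g y'))"
    by (simp add: sum_distrib_left Ps mult.assoc)
  also have "\<dots> = P0 * (\<Sum>y'\<in>labels Y. g y' * (1 - p y'))"
    by (simp add: swap_sum[OF fin sp])
  also have "\<dots> = P0 * (\<Sum>y'\<in>labels Y. (real Y - 1) * (p y' * (f y' - e y')))"
    by (simp add: gp)
  also have "\<dots> = (real Y - 1) * ((\<Sum>y\<in>labels Y. seq_prob Y \<alpha> (ys@[y]) * f y) - (\<Sum>y\<in>labels Y. seq_prob Y \<alpha> (ys@[y]) * e y))"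
    by (simp add: Ps sum_distrib_left right_diff_distrib sum_subtractf mult_ac)
  finally show ?thesis unfolding e_def g_def .
qed

theorem proposition3:
  fixes Y l :: nat and \<alpha> :: real
  assumes "Y \<ge> 2" and "\<alpha> > 0"
  shows "valid_evar Y \<alpha> l (e_opt Y \<alpha>)
    \<and> (\<forall>f. valid_evar Y \<alpha> l f \<longrightarrow> objective Y \<alpha> l f \<le> objective Y \<alpha> l (e_opt Y \<alpha>))
    \<and> (\<forall>f. valid_evar Y \<alpha> l f \<and> objective Y \<alpha> l f = objective Y \<alpha> l (e_opt Y \<alpha>) \<longrightarrow>
          (\<forall>ys\<in>seqs Y l. \<forall>y'\<in>labels Y. f ys y' = e_opt Y \<alpha> ys y'))"
proof -
  note Y2 = assms(1) and \<alpha> = assms(2)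
  have Y1: "Y \<ge> 1" using Y2 by simp
  have Ysub: "\<And>ys. ys \<in> seqs Y l \<Longrightarrow> set ys \<subseteq> {1..Y}" by (simp add: seqs_def labels_def)
  have finS: "finite (seqs Y l)" by (rule finite_seqs)
  have finL: "finite (labels Y)" by (simp add: labels_def)
  define e where "e = e_opt Y \<alpha>"
  have epos: "\<And>ys y. ys \<in> seqs Y l \<Longrightarrow> y \<in> labels Y \<Longrightarrow> e ys y > 0"
    unfolding e_def labels_def using pp_e_facts(3)[OF Y2 \<alpha>] Ysub by blast
  have Ppos: "\<And>ys y. ys \<in> seqs Y l \<Longrightarrow> y \<in> labels Y \<Longrightarrow> seq_prob Y \<alpha> (ys @ [y]) > 0"
    using seq_prob_pos[OF Y1 \<alpha>] Ysub by (auto simp: labels_def)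
  have Ee: "bayes_expect Y \<alpha> l e = 1"
  proof -
    have "bayes_expect Y \<alpha> l e = (\<Sum>ys\<in>seqs Y l. seq_prob Y \<alpha> ys)"
      unfolding bayes_expect_def
    proof (rule sum.cong[OF refl])
      fix ys assume ys: "ys \<in> seqs Y l"
      have s: "set ys \<subseteq> {1..Y}" using Ysub[OF ys] .
      have "(\<Sum>y\<in>labels Y. seq_prob Y \<alpha> (ys @ [y]) * e ys y)
          = (\<Sum>y\<in>labels Y. seq_prob Y \<alpha> ys * ((1 - pp Y \<alpha> ys y) / (real Y - 1)))"
      proof (rule sum.cong[OF refl])
        fix y assume "y \<in> labels Y"
        then have y: "y \<in> {1..Y}" by (simp add: labels_def)
        have rel: "e ys y * ((real Y - 1) * pp Y \<alpha> ys y) = 1 - pp Y \<alpha> ys y"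
          unfolding e_def by (rule pp_e_facts(4)[OF Y2 \<alpha> s y])
        have "real Y - 1 > 0" using Y2 by simp
        then show "seq_prob Y \<alpha> (ys @ [y]) * e ys y = seq_prob Y \<alpha> ys * ((1 - pp Y \<alpha> ys y) / (real Y - 1))"
          unfolding seq_prob_snoc[OF Y1 \<alpha> s y] rel[symmetric] by (simp add: field_simps)
      qed
      also have "\<dots> = seq_prob Y \<alpha> ys * ((real Y - (\<Sum>y\<in>labels Y. pp Y \<alpha> ys y)) / (real Y - 1))"
        by (simp add: sum_distrib_left[symmetric] sum_divide_distrib[symmetric] sum_subtractf labels_def)
      also have "\<dots> = seq_prob Y \<alpha> ys"
        using sum_pp[OF \<alpha> s Y1] Y2 by (simp add: labels_def)
      finally show "(\<Sum>y\<in>labels Y. seq_prob Y \<alpha> (ys @ [y]) * e ys y) = seq_prob Y \<alpha> ys" .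
    qed
    also have "\<dots> = 1" by (rule sum_seq_prob[OF Y1 \<alpha>])
    finally show ?thesis .
  qed
  have valid_e: "valid_evar Y \<alpha> l e"
    unfolding valid_evar_def using Ee epos by (auto intro: less_imp_le)
  define R where "R = (\<Sum>ys\<in>seqs Y l. \<Sum>y\<in>labels Y. seq_prob Y \<alpha> (ys@[y]) * (\<Sum>y'\<in>labels Y - {y}. ln (e ys y')))"
  have obj_e: "objective Y \<alpha> l e = ereal R"
    unfolding objective_def bayes_expect_ereal_def R_def sum_ereal[symmetric]
  proof (intro sum.cong[OF refl])
    fix ys y assume ys: "ys \<in> seqs Y l" and y: "y \<in> labels Y"
    have "(\<Sum>y'\<in>labels Y - {y}. lnE (e ys y')) = (\<Sum>y'\<in>labels Y - {y}. ereal (ln (e ys y')))"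
      by (rule sum.cong[OF refl]) (use epos[OF ys] in \<open>auto simp: lnE_def\<close>)
    then show "ereal (seq_prob Y \<alpha> (ys @ [y])) * (\<Sum>y'\<in>labels Y - {y}. lnE (e ys y'))
        = ereal (seq_prob Y \<alpha> (ys @ [y]) * (\<Sum>y'\<in>labels Y - {y}. ln (e ys y')))"
      by simp
  qed
  define H where "H = (\<lambda>f. (\<Sum>ys\<in>seqs Y l. \<Sum>y\<in>labels Y. seq_prob Y \<alpha> (ys@[y]) *
       (\<Sum>y'\<in>labels Y - {y}. ln (e ys y') + (f ys y' - e ys y') / e ys y')))"
  have H_eq: "H f = R + (real Y - 1) * (bayes_expect Y \<alpha> l f - 1)" for f
  proof -
    have "H f = (\<Sum>ys\<in>seqs Y l. (\<Sum>y\<in>labels Y. seq_prob Y \<alpha> (ys@[y]) * (\<Sum>y'\<in>labels Y - {y}. ln (e ys y')))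
     + (real Y - 1) * ((\<Sum>y\<in>labels Y. seq_prob Y \<alpha> (ys@[y]) * f ys y) - (\<Sum>y\<in>labels Y. seq_prob Y \<alpha> (ys@[y]) * e ys y)))"
      unfolding H_def e_def by (rule sum.cong[OF refl]) (rule per_ys[OF Y2 \<alpha> Ysub])
    also have "\<dots> = R + (real Y - 1) * (bayes_expect Y \<alpha> l f - bayes_expect Y \<alpha> l e)"
      unfolding R_def bayes_expect_def by (simp add: sum.distrib sum_distrib_left sum_subtractf right_diff_distrib)
    finally show ?thesis unfolding Ee .
  qed
  have term_le: "ereal (seq_prob Y \<alpha> (ys @ [y])) * (\<Sum>y'\<in>labels Y - {y}. lnE (f ys y'))
      \<le> ereal (seq_prob Y \<alpha> (ys@[y]) * (\<Sum>y'\<in>labels Y - {y}. ln (e ys y') + (f ys y' - e ys y') / e ys y'))"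
    if f: "valid_evar Y \<alpha> l f" and ys: "ys \<in> seqs Y l" and y: "y \<in> labels Y" for f ys y
  proof -
    have "(\<Sum>y'\<in>labels Y - {y}. lnE (f ys y')) \<le> ereal (\<Sum>y'\<in>labels Y - {y}. ln (e ys y') + (f ys y' - e ys y') / e ys y')"
      using f epos[OF ys] ys unfolding valid_evar_def by (intro sum_le_ereal lnE_le) auto
    then have "ereal (seq_prob Y \<alpha> (ys @ [y])) * (\<Sum>y'\<in>labels Y - {y}. lnE (f ys y'))
        \<le> ereal (seq_prob Y \<alpha> (ys @ [y])) * ereal (\<Sum>y'\<in>labels Y - {y}. ln (e ys y') + (f ys y' - e ys y') / e ys y')"
      using Ppos[OF ys y] by (intro ereal_mult_left_mono) auto
    then show ?thesis by simp
  qed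
  have term_less: "ereal (seq_prob Y \<alpha> (ys @ [y])) * (\<Sum>y'\<in>labels Y - {y}. lnE (f ys y'))
      < ereal (seq_prob Y \<alpha> (ys@[y]) * (\<Sum>y'\<in>labels Y - {y}. ln (e ys y') + (f ys y' - e ys y') / e ys y'))"
    if f: "valid_evar Y \<alpha> l f" and ys: "ys \<in> seqs Y l" and y: "y \<in> labels Y"
       and y0: "y0 \<in> labels Y - {y}" and ne: "f ys y0 \<noteq> e ys y0" for f ys y y0
  proof -
    have "(\<Sum>y'\<in>labels Y - {y}. lnE (f ys y')) < ereal (\<Sum>y'\<in>labels Y - {y}. ln (e ys y') + (f ys y' - e ys y') / e ys y')"
    proof (rule sum_strict_ereal[OF _ _ y0])
      show "finite (labels Y - {y})" using finL by simp
      show "\<And>a. a \<in> labels Y - {y} \<Longrightarrow> lnE (f ys a) \<le> ereal (ln (e ys a) + (f ys a - e ys a) / e ys a)"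
        using f epos[OF ys] ys unfolding valid_evar_def by (intro lnE_le) auto
      show "lnE (f ys y0) < ereal (ln (e ys y0) + (f ys y0 - e ys y0) / e ys y0)"
        using f epos[OF ys] ys y0 ne unfolding valid_evar_def by (intro lnE_less) auto
    qed
    then have "ereal (seq_prob Y \<alpha> (ys @ [y])) * (\<Sum>y'\<in>labels Y - {y}. lnE (f ys y'))
        < ereal (seq_prob Y \<alpha> (ys @ [y])) * ereal (\<Sum>y'\<in>labels Y - {y}. ln (e ys y') + (f ys y' - e ys y') / e ys y')"
      using Ppos[OF ys y] by (intro ereal_mult_strict_left_mono) auto
    then show ?thesis by simp
  qed
  have obj_le: "objective Y \<alpha> l f \<le> ereal (H f)" if f: "valid_evar Y \<alpha> l f" for f
    unfolding objective_def bayes_expect_ereal_def H_def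
    by (intro sum_le_ereal term_le[OF f]) auto
  have H_le: "H f \<le> R" if f: "valid_evar Y \<alpha> l f" for f
  proof -
    have "bayes_expect Y \<alpha> l f \<le> 1" using f by (simp add: valid_evar_def)
    moreover have "real Y - 1 > 0" using Y2 by simp
    ultimately show ?thesis unfolding H_eq by (simp add: mult_nonneg_nonpos)
  qed
  have part2: "objective Y \<alpha> l f \<le> objective Y \<alpha> l e" if f: "valid_evar Y \<alpha> l f" for f
    using obj_le[OF f] H_le[OF f] obj_e by (simp add: order_trans)
  have part3: "f ys y' = e ys y'"
    if f: "valid_evar Y \<alpha> l f" and eq: "objective Y \<alpha> l f = objective Y \<alpha> l e"
      and ys: "ys \<in> seqs Y l" and y': "y' \<in> labels Y" for f ys y'
  proof (rule ccontr)
    assume ne: "f ys y' \<noteq> e ys y'"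
    define y1 where "y1 = (if y' = 1 then 2 else 1::nat)"
    have y1: "y1 \<in> labels Y" "y1 \<noteq> y'" using Y2 unfolding y1_def labels_def by auto
    have y'1: "y' \<in> labels Y - {y1}" using y' y1 by auto
    have "objective Y \<alpha> l f < ereal (H f)"
      unfolding objective_def bayes_expect_ereal_def H_def
    proof (rule sum_strict_ereal[OF finS _ ys])
      show "\<And>a. a \<in> seqs Y l \<Longrightarrow> (\<Sum>y\<in>labels Y. ereal (seq_prob Y \<alpha> (a @ [y])) * (\<Sum>y'\<in>labels Y - {y}. lnE (f a y')))
          \<le> ereal (\<Sum>y\<in>labels Y. seq_prob Y \<alpha> (a @ [y]) * (\<Sum>y'\<in>labels Y - {y}. ln (e a y') + (f a y' - e a y') / e a y'))"
        by (intro sum_le_ereal term_le[OF f]) auto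
      show "(\<Sum>y\<in>labels Y. ereal (seq_prob Y \<alpha> (ys @ [y])) * (\<Sum>y'\<in>labels Y - {y}. lnE (f ys y')))
          < ereal (\<Sum>y\<in>labels Y. seq_prob Y \<alpha> (ys @ [y]) * (\<Sum>y'\<in>labels Y - {y}. ln (e ys y') + (f ys y' - e ys y') / e ys y'))"
        by (rule sum_strict_ereal[OF finL _ y1(1)]) (auto intro: term_le[OF f ys] term_less[OF f ys y1(1) y'1 ne])
    qed
    also have "\<dots> \<le> ereal R" using H_le[OF f] by simp
    finally show False using eq obj_e by simp
  qed
  show ?thesis
    using valid_e part2 part3 unfolding e_def by blast
qed

end
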